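(* Let $\hat N$ be any population size estimator which is consistent for the model consisting of all probability vectors $(p_x)_{x\in\{0,1\}^L}$ with all $p_x>0$ and $\gamma=0$. Then for any probability vector $(p_x)$ with all $p_x>0$, $$\hat N = \Big(1+\tfrac{p_{\mathbf{0}}}{1-p_{\mathbf{0}}}e^{\gamma} + o(1)\Big)\, n_{\text{obs}},$$ where $o(1)$ denotes a term tending to zero (almost surely) as $N\to\infty$.
   Context: Multiple systems estimation setting with $L\ge 2$ lists: individuals $i=1,2,3,\dots$ have independent, identically distributed list inclusion patterns $W_i\in\{0,1\}^L$ with $\mathbb{P}(W_i=x)=p_x>0$; $\mathbf{0}=(0,\dots,0)$ denotes non-observation. For population size $N$, the observed counts are $n_x^{(N)}=\#\{i\le N: W_i=x\}$, $x\neq\mathbf{0}$, and $n_{\text{obs}}=\sum_{x\ne\mathbf{0}}n_x^{(N)}$. A population size estimator is a function of the observed counts; it is consistent for a model if $\hat N/N\to1$ almost surely as $N\to\infty$ whenever $(p_x)$ belongs to the model. The full-way interaction term is $\gamma=\sum_{x\in\{0,1\}^L}(-1)^{|x|+1}\log p_x$ with $|x|=\sum_i x_i$. *)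

theory Defs
  imports "HOL-Probability.Probability"
begin

text \<open>Inclusion patterns x in {0,1}^L are encoded as subsets of {..<L}
  (the set of lists an individual appears on); the unobserved pattern 0 is the
  empty set and |x| is card x.  Individuals' patterns W_1, W_2, ... are i.i.d.
  with law P, realised canonically on the stream space of P: W_i = w !! i.\<close>

definition counts :: "nat \<Rightarrow> nat set stream \<Rightarrow> nat set \<Rightarrow> nat" where
  "counts N w x = (if x = {} then 0 else card {i. i < N \<and> w !! i = x})"

definition nobs :: "nat \<Rightarrow> nat set stream \<Rightarrow> nat" where
  "nobs N w = card {i. i < N \<and> w !! i \<noteq> {}}"

definition full_interaction :: "nat \<Rightarrow> nat set pmf \<Rightarrow> real" where
  "full_interaction L P = (\<Sum>x\<in>Pow {..<L}. (-1) ^ (card x + 1) * ln (pmf P x))"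

definition consistent_gamma0 :: "nat \<Rightarrow> ((nat set \<Rightarrow> nat) \<Rightarrow> real) \<Rightarrow> bool" where
  "consistent_gamma0 L E \<longleftrightarrow>
     (\<forall>Q. set_pmf Q = Pow {..<L} \<and> full_interaction L Q = 0 \<longrightarrow>
        (AE w in stream_space (measure_pmf Q).
           (\<lambda>N. E (counts N w) / real N) \<longlonglongrightarrow> 1))"

end

theory Submission
  imports Defs
begin


definition cntA :: "nat set set \<Rightarrow> nat \<Rightarrow> nat set stream \<Rightarrow> nat" where
  "cntA A n w = card {i. i < n \<and> w !! i \<in> A}"

lemma card_less_Suc_shift:
  "card {i. i < Suc n \<and> P i} = (if P 0 then 1 else 0) + card {i. i < n \<and> P (Suc i)}"
proof -
  have eq: "{i. i < Suc n \<and> P i} = (if P 0 then {0} else {}) \<union> Suc ` {i. i < n \<and> P (Suc i)}"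
    by (auto simp: less_Suc_eq_0_disj)
  show ?thesis unfolding eq
    by (subst card_Un_disjoint) (auto simp: card_image)
qed

lemma cntA_Stream: "cntA A (Suc n) (x ## w) = (if x \<in> A then 1 else 0) + cntA A n w"
  unfolding cntA_def by (subst card_less_Suc_shift) simp

lemma cntA_sum: "cntA A n w = (\<Sum>i<n. if w !! i \<in> A then 1 else 0)"
  unfolding cntA_def
proof (induction n)
  case (Suc n)
  have "{i. i < Suc n \<and> w !! i \<in> A} = (if w !! n \<in> A then insert n {i. i < n \<and> w !! i \<in> A} else {i. i < n \<and> w !! i \<in> A})"
    by (auto simp: less_Suc_eq)
  then show ?case using Suc by (simp add: card_insert_if)
qed simp

lemma cntA_compl: "cntA A n w + cntA (- A) n w = n"
  unfolding cntA_sum by (induction n) auto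

lemma pred_snth_in[measurable]:
  "Measurable.pred (stream_space (measure_pmf P)) (\<lambda>w. w !! i \<in> A)"
proof -
  have "(\<lambda>w. w !! i) \<in> measurable (stream_space (measure_pmf P)) (measure_pmf P)" by simp
  moreover have "(\<lambda>x. x \<in> A) \<in> measurable (measure_pmf P) (count_space UNIV)" by simp
  ultimately show ?thesis by (rule measurable_compose)
qed

lemma measurable_cntA[measurable]:
  "(\<lambda>w. cntA A n w) \<in> measurable (stream_space (measure_pmf P)) (count_space UNIV)"
  unfolding cntA_sum by measurable

lemma borel_cntA:
  fixes f :: "nat \<Rightarrow> 'b::topological_space"
  shows "(\<lambda>w. f (cntA A n w)) \<in> borel_measurable (stream_space (measure_pmf P))"
  by (rule measurable_compose[OF measurable_cntA]) simp

lemma pred_cntA: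
  "{w \<in> space (stream_space (measure_pmf P)). a \<le> real (cntA A n w)} \<in> sets (stream_space (measure_pmf P))"
proof -
  have "(\<lambda>w. real (cntA A n w)) \<in> borel_measurable (stream_space (measure_pmf P))" by (rule borel_cntA)
  from measurable_sets[OF this, of "{a..}"] show ?thesis
    by (simp add: vimage_def Int_def conj_commute)
qed

lemma mgf1:
  fixes P :: "nat set pmf" and s :: real
  shows "(\<integral>\<^sup>+x. ennreal (exp (s * (if x \<in> A then 1 else 0))) \<partial>measure_pmf P)
    = ennreal (exp s * measure P A + (1 - measure P A))"
proof -
  have "(\<integral>\<^sup>+x. ennreal (exp (s * (if x \<in> A then 1 else 0))) \<partial>measure_pmf P)
     = (\<integral>\<^sup>+x. ennreal (exp s) * indicator A x + indicator (- A) x \<partial>measure_pmf P)"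
    by (intro nn_integral_cong) (auto split: split_indicator)
  also have "\<dots> = ennreal (exp s) * emeasure P A + emeasure P (- A)"
    by (subst nn_integral_add) (auto simp: nn_integral_cmult_indicator)
  also have "emeasure P (- A) = ennreal (1 - measure P A)"
    using measure_pmf.prob_compl[of A P]
    by (simp add: measure_pmf.emeasure_eq_measure Compl_eq_Diff_UNIV)
  also have "emeasure P A = ennreal (measure P A)"
    by (simp add: measure_pmf.emeasure_eq_measure)
  finally show ?thesis
    using measure_pmf.prob_le_1[of P A] by (simp add: ennreal_mult)
qed

lemma mgf_cntA:
  fixes P :: "nat set pmf" and s :: real
  shows "(\<integral>\<^sup>+w. ennreal (exp (s * real (cntA A n w))) \<partial>stream_space (measure_pmf P))
     = ennreal (exp s * measure P A + (1 - measure P A)) ^ n"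
proof (induction n)
  case 0
  interpret S: prob_space "stream_space (measure_pmf P)"
    by (rule prob_space.prob_space_stream_space[OF measure_pmf.prob_space_axioms])
  show ?case by (simp add: cntA_def S.emeasure_space_1)
next
  case (Suc n)
  have "(\<integral>\<^sup>+w. ennreal (exp (s * real (cntA A (Suc n) w))) \<partial>stream_space (measure_pmf P))
    = (\<integral>\<^sup>+x. \<integral>\<^sup>+w. ennreal (exp (s * real (cntA A (Suc n) (x ## w)))) \<partial>stream_space (measure_pmf P) \<partial>measure_pmf P)"
    by (rule prob_space.nn_integral_stream_space[OF measure_pmf.prob_space_axioms]) (rule borel_cntA)
  also have "\<dots> = (\<integral>\<^sup>+x. \<integral>\<^sup>+w. ennreal (exp (s * (if x \<in> A then 1 else 0))) * ennreal (exp (s * real (cntA A n w))) \<partial>stream_space (measure_pmf P) \<partial>measure_pmf P)"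
    by (intro nn_integral_cong) (simp add: cntA_Stream ennreal_mult[symmetric] exp_add[symmetric] distrib_left)
  also have "\<dots> = (\<integral>\<^sup>+x. ennreal (exp (s * (if x \<in> A then 1 else 0))) * (\<integral>\<^sup>+w. ennreal (exp (s * real (cntA A n w))) \<partial>stream_space (measure_pmf P)) \<partial>measure_pmf P)"
    by (intro nn_integral_cong nn_integral_cmult borel_cntA)
  also have "\<dots> = (\<integral>\<^sup>+x. ennreal (exp (s * (if x \<in> A then 1 else 0))) \<partial>measure_pmf P) * (\<integral>\<^sup>+w. ennreal (exp (s * real (cntA A n w))) \<partial>stream_space (measure_pmf P))"
    by (rule nn_integral_multc) simp
  finally show ?case by (simp add: Suc mgf1)
qed

lemma tail_bound:
  fixes P :: "nat set pmf" and s a :: real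
  assumes "0 \<le> s"
  shows "emeasure (stream_space (measure_pmf P)) {w \<in> space (stream_space (measure_pmf P)). a \<le> real (cntA A n w)}
     \<le> ennreal ((exp s * measure P A + (1 - measure P A)) ^ n / exp (s * a))"
proof -
  let ?S = "stream_space (measure_pmf P)"
  define m where "m = exp s * measure P A + (1 - measure P A)"
  have m0: "0 \<le> m" unfolding m_def by (simp add: add_nonneg_nonneg)
  have "emeasure ?S {w \<in> space ?S. a \<le> real (cntA A n w)} = (\<integral>\<^sup>+w. indicator {w \<in> space ?S. a \<le> real (cntA A n w)} w \<partial>?S)"
    by (rule nn_integral_indicator[symmetric]) (rule pred_cntA)
  also have "\<dots> \<le> (\<integral>\<^sup>+w. ennreal (exp (s * real (cntA A n w))) * ennreal (1 / exp (s * a)) \<partial>?S)"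
  proof (intro nn_integral_mono)
    fix w
    show "indicator {w \<in> space ?S. a \<le> real (cntA A n w)} w \<le> ennreal (exp (s * real (cntA A n w))) * ennreal (1 / exp (s * a))"
    proof (cases "a \<le> real (cntA A n w)")
      case True
      then have "exp (s * a) \<le> exp (s * real (cntA A n w))"
        using assms by (simp add: mult_left_mono)
      then have "1 \<le> exp (s * real (cntA A n w)) * (1 / exp (s * a))"
        by simp
      then show ?thesis
        by (simp add: ennreal_mult[symmetric] split: split_indicator)
    qed (simp split: split_indicator)
  qed
  also have "\<dots> = (\<integral>\<^sup>+w. ennreal (exp (s * real (cntA A n w))) \<partial>?S) * ennreal (1 / exp (s * a))"
    by (rule nn_integral_multc) (rule borel_cntA)
  also have "\<dots> = ennreal m ^ n * ennreal (1 / exp (s * a))"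
    unfolding mgf_cntA m_def ..
  also have "\<dots> = ennreal (m ^ n / exp (s * a))"
    using m0 by (simp add: ennreal_power ennreal_mult divide_inverse)
  finally show ?thesis unfolding m_def .
qed

lemma good_s:
  fixes q e :: real
  assumes "0 \<le> q" "q \<le> 1" "0 < e" "e \<le> 1"
  shows "exp (e/2) * q + (1 - q) < exp (e/2 * (q + e))"
proof -
  define s where "s = e/2"
  have s: "0 < s" "s \<le> 1" "e = 2 * s" using assms by (auto simp: s_def)
  have "exp s \<le> 1 + s + s^2" using exp_bound[of s] s by simp
  then have "exp s * q \<le> (1 + s + s^2) * q" using assms by (simp add: mult_right_mono)
  also have "\<dots> \<le> q + s * q + s^2" using assms s by (simp add: algebra_simps power2_eq_square mult_left_le)
  finally have 1: "exp s * q + (1 - q) \<le> 1 + s * q + s^2" by simp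
  have "1 + s * (q + e) \<le> exp (s * (q + e))" by (rule exp_ge_add_one_self)
  moreover have "1 + s * q + s^2 < 1 + s * (q + e)" using s by (simp add: algebra_simps power2_eq_square)
  ultimately have "exp s * q + (1 - q) < exp (s * (q + e))" using 1 by linarith
  then show ?thesis by (simp add: s_def)
qed


lemma upper_freq:
  fixes P :: "nat set pmf" and e :: real
  assumes e: "0 < e" "e \<le> 1"
  shows "AE w in stream_space (measure_pmf P).
           eventually (\<lambda>n. real (cntA A n w) < real n * (measure P A + e)) sequentially"
proof -
  let ?S = "stream_space (measure_pmf P)"
  interpret S: prob_space ?S
    by (rule prob_space.prob_space_stream_space[OF measure_pmf.prob_space_axioms])
  define q where "q = measure P A"
  define s where "s = e/2"
  define m where "m = exp s * q + (1-q)"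
  define r where "r = m / exp (s * (q+e))"
  have q: "0 \<le> q" "q \<le> 1" unfolding q_def by auto
  have m0: "0 \<le> m" unfolding m_def using q by (simp add: add_nonneg_nonneg)
  have "m < exp (s * (q+e))" unfolding m_def s_def using good_s[OF q e] .
  then have r: "0 \<le> r" "r < 1" unfolding r_def using m0 by auto
  define B where "B n = {w \<in> space ?S. real n * (q+e) \<le> real (cntA A n w)}" for n
  have Bm: "B n \<in> sets ?S" for n unfolding B_def by (rule pred_cntA)
  have bound: "measure ?S (B n) \<le> r ^ n" for n
  proof -
    have "emeasure ?S (B n) \<le> ennreal (m ^ n / exp (s * (real n * (q+e))))"
      unfolding B_def m_def q_def by (rule tail_bound) (use e in \<open>simp add: s_def\<close>)
    also have "m ^ n / exp (s * (real n * (q+e))) = r ^ n"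
    proof -
      have "exp (s * (real n * (q+e))) = exp (s * (q+e)) ^ n"
        by (subst exp_of_nat_mult[symmetric]) (simp add: algebra_simps)
      then show ?thesis unfolding r_def by (simp add: power_divide)
    qed
    finally have "ennreal (measure ?S (B n)) \<le> ennreal (r ^ n)"
      by (simp add: S.emeasure_eq_measure)
    then show ?thesis using r by (simp add: ennreal_le_iff)
  qed
  have summ: "summable (\<lambda>n. measure ?S (B n))"
    by (rule summable_comparison_test'[of "\<lambda>n. r ^ n" 0])
       (use r bound in \<open>auto intro: summable_geometric\<close>)
  have "AE x in ?S. eventually (\<lambda>n. x \<in> space ?S - B n) sequentially"
    by (rule borel_cantelli_AE1[OF Bm]) (auto simp: summ S.emeasure_eq_measure)
  then show ?thesis
    by (rule eventually_mono) (auto elim!: eventually_mono simp: B_def q_def not_le)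
qed

lemma conv_lemma:
  fixes c d :: "nat \<Rightarrow> nat" and q :: real
  assumes cd: "\<And>n. c n + d n = n"
    and ev: "\<And>k::nat. eventually (\<lambda>n. real (c n) < real n * (q + 1 / real (Suc k))) sequentially"
    and ev2: "\<And>k::nat. eventually (\<lambda>n. real (d n) < real n * ((1 - q) + 1 / real (Suc k))) sequentially"
  shows "(\<lambda>n. real (c n) / real n) \<longlonglongrightarrow> q"
proof (rule LIMSEQ_I)
  fix r :: real assume "0 < r"
  then obtain n0 where n0: "n0 > 0" "inverse (real n0) < r" using ex_inverse_of_nat_less by blast
  define k where "k = n0 - 1"
  have k: "inverse (real (Suc k)) < r" using n0 by (simp add: k_def)
  define \<epsilon> where "\<epsilon> = 1 / real (Suc k)"
  have \<epsilon>: "\<epsilon> < r" "0 < \<epsilon>" using k by (auto simp: \<epsilon>_def inverse_eq_divide)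
  obtain N1 where N1: "\<And>n. n \<ge> N1 \<Longrightarrow> real (c n) < real n * (q + \<epsilon>)"
    using ev[of k] unfolding eventually_sequentially \<epsilon>_def by blast
  obtain N2 where N2: "\<And>n. n \<ge> N2 \<Longrightarrow> real (d n) < real n * ((1 - q) + \<epsilon>)"
    using ev2[of k] unfolding eventually_sequentially \<epsilon>_def by blast
  show "\<exists>no. \<forall>n\<ge>no. norm (real (c n) / real n - q) < r"
  proof (intro exI allI impI)
    fix n assume n: "n \<ge> max (max N1 N2) 1"
    then have npos: "real n > 0" by auto
    have a: "real (c n) < real n * (q + \<epsilon>)" using N1 n by auto
    have b: "real (d n) < real n * ((1 - q) + \<epsilon>)" using N2 n by auto
    have "real (c n) + real (d n) = real n" using cd[of n] by (metis of_nat_add)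
    then have b': "real n * (q - \<epsilon>) < real (c n)" using b by (simp add: algebra_simps)
    have "real (c n) / real n < q + \<epsilon>" using a npos by (simp add: divide_less_eq mult.commute)
    moreover have "q - \<epsilon> < real (c n) / real n" using b' npos by (simp add: less_divide_eq mult.commute)
    ultimately show "norm (real (c n) / real n - q) < r" using \<epsilon> by auto
  qed
qed

lemma freq_limit:
  fixes P :: "nat set pmf"
  shows "AE w in stream_space (measure_pmf P). (\<lambda>n. real (cntA A n w) / real n) \<longlonglongrightarrow> measure P A"
proof -
  have compl: "measure P (- A) = 1 - measure P A"
    using measure_pmf.prob_compl[of A P] by (simp add: Compl_eq_Diff_UNIV)
  have "AE w in stream_space (measure_pmf P). \<forall>k::nat.
     eventually (\<lambda>n. real (cntA A n w) < real n * (measure P A + 1 / real (Suc k))) sequentially \<and>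
     eventually (\<lambda>n. real (cntA (- A) n w) < real n * ((1 - measure P A) + 1 / real (Suc k))) sequentially"
    unfolding AE_all_countable AE_conj_iff compl[symmetric]
    by (auto intro!: upper_freq)
  then show ?thesis
    by (rule eventually_mono) (rule conv_lemma[OF cntA_compl], auto)
qed


definition L0 :: "nat set stream \<Rightarrow> nat" where
  "L0 w = (LEAST i. w !! i \<noteq> {})"

definition nxt :: "nat set stream \<Rightarrow> nat set stream" where
  "nxt w = sdrop (L0 w) w"

primcorec obs :: "nat set stream \<Rightarrow> nat set stream" where
  "obs w = shd (nxt w) ## obs (stl (nxt w))"

lemma obs_Stream: "obs (t ## w) = (if t = {} then obs w else t ## obs w)"
proof (cases "t = {}")
  case False
  then have "L0 (t ## w) = 0" unfolding L0_def by (intro Least_eq_0) simp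
  then show ?thesis using False by (subst obs.code) (simp add: nxt_def)
next
  case True
  show ?thesis
  proof (cases "\<exists>i. w !! i \<noteq> {}")
    case True2: True
    then obtain i where i: "w !! i \<noteq> {}" by blast
    have "(LEAST i. ({} ## w) !! i \<noteq> {}) = Suc (LEAST m. ({} ## w) !! Suc m \<noteq> {})"
      by (rule Least_Suc[of _ "Suc i"]) (use i in \<open>auto simp: Stream_snth\<close>)
    then have "L0 ({} ## w) = Suc (L0 w)" unfolding L0_def by simp
    then have nx: "nxt ({} ## w) = nxt w" by (simp add: nxt_def)
    have "obs ({} ## w) = shd (nxt ({} ## w)) ## obs (stl (nxt ({} ## w)))" by (rule obs.code)
    also have "\<dots> = shd (nxt w) ## obs (stl (nxt w))" by (simp add: nx)
    also have "\<dots> = obs w" by (rule obs.code[symmetric])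
    finally show ?thesis using True by simp
  next
    case False
    then have "snth ({} ## w) = snth w" by (auto simp: fun_eq_iff Stream_snth split: nat.split)
    then have "{} ## w = w" by (metis stream_smap_nats)
    then show ?thesis using True by simp
  qed
qed

lemma pred_snth_Q:
  "(\<lambda>w. Q (w !! i)) \<in> measurable (stream_space (measure_pmf P)) (count_space UNIV)"
proof -
  have "(\<lambda>w. w !! i) \<in> measurable (stream_space (measure_pmf P)) (measure_pmf P)" by simp
  moreover have "Q \<in> measurable (measure_pmf P) (count_space UNIV)" by simp
  ultimately show ?thesis by (rule measurable_compose)
qed

lemma measurable_L0:
  assumes g: "g \<in> measurable N (stream_space (measure_pmf P))"
  shows "(\<lambda>x. L0 (g x)) \<in> measurable N (count_space UNIV)"
  unfolding L0_def
  by (rule measurable_Least, rule measurable_compose[OF g pred_snth_Q])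

lemma measurable_obs:
  "obs \<in> measurable (stream_space (measure_pmf P)) (stream_space (measure_pmf R))"
proof -
  let ?S = "stream_space (measure_pmf P)"
  have "(\<lambda>x. obs ((\<lambda>x. x) x)) \<in> measurable ?S (stream_space (measure_pmf R))"
  proof (rule measurable_stream_coinduct[where F = "\<lambda>f. \<exists>g \<in> measurable ?S ?S. f = (\<lambda>x. obs (g x))"])
    show "\<exists>g\<in>measurable ?S ?S. (\<lambda>x. obs ((\<lambda>x. x) x)) = (\<lambda>x. obs (g x))"
      by (intro bexI[of _ "\<lambda>x. x"]) (auto simp: measurable_ident_sets)
  next
    fix f assume "\<exists>g\<in>measurable ?S ?S. f = (\<lambda>x. obs (g x))"
    then obtain g where g: "g \<in> measurable ?S ?S" and f: "f = (\<lambda>x. obs (g x))" by blast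
    have "(\<lambda>x. g x !! L0 (g x)) \<in> measurable ?S (count_space UNIV)"
    proof (rule measurable_compose_countable[where f = "\<lambda>i x. g x !! i" and g = "\<lambda>x. L0 (g x)"])
      fix i
      show "(\<lambda>x. g x !! i) \<in> measurable ?S (count_space UNIV)"
        by (rule measurable_compose[OF g pred_snth_Q[where Q = "\<lambda>x. x"]])
    qed (rule measurable_L0[OF g])
    moreover have "shd (obs (g x)) = g x !! L0 (g x)" for x
      by (subst obs.code) (simp add: nxt_def)
    ultimately show "(\<lambda>x. shd (f x)) \<in> measurable ?S (measure_pmf R)"
      unfolding f by simp
  next
    fix f assume "\<exists>g\<in>measurable ?S ?S. f = (\<lambda>x. obs (g x))"
    then obtain g where g: "g \<in> measurable ?S ?S" and f: "f = (\<lambda>x. obs (g x))" by blast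
    have "(\<lambda>x. sdrop (Suc (L0 (g x))) (g x)) \<in> measurable ?S ?S"
    proof (rule measurable_compose_countable[where f = "\<lambda>i x. sdrop (Suc i) (g x)" and g = "\<lambda>x. L0 (g x)"])
      fix i
      show "(\<lambda>x. sdrop (Suc i) (g x)) \<in> measurable ?S ?S"
        by (rule measurable_compose[OF g measurable_sdrop])
    qed (rule measurable_L0[OF g])
    moreover have "stl (obs (g x)) = obs (sdrop (Suc (L0 (g x))) (g x))" for x
      by (subst obs.code) (simp add: nxt_def)
    ultimately show "\<exists>g\<in>measurable ?S ?S. (\<lambda>x. stl (f x)) = (\<lambda>x. obs (g x))"
      unfolding f by auto
  qed
  then show ?thesis by simp
qed

lemma counts_obs:
  assumes "x \<noteq> {}"
  shows "card {i. i < N \<and> w !! i = x} = card {j. j < cntA (- {{}}) N w \<and> obs w !! j = x}"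
proof (induction N arbitrary: w)
  case 0
  then show ?case by (simp add: cntA_def)
next
  case (Suc N)
  obtain t u where w: "w = t ## u" by (metis stream.collapse)
  show ?case
  proof (cases "t = {}")
    case True
    then show ?thesis using Suc[of u] assms
      by (simp add: w cntA_Stream card_less_Suc_shift obs_Stream Stream_snth)
  next
    case False
    then show ?thesis using Suc[of u] assms
      by (simp add: w cntA_Stream card_less_Suc_shift obs_Stream Stream_snth)
  qed
qed


lemma scyl_Cons_iff: "s ## \<omega> \<in> scylinder UNIV (X # Xs) \<longleftrightarrow> s \<in> X \<and> \<omega> \<in> scylinder UNIV Xs"
  by simp

lemma obs_law:
  fixes P :: "nat set pmf"
  assumes ne: "set_pmf P \<inter> - {{}} \<noteq> {}"
  shows "distr (stream_space (measure_pmf P)) (stream_space (measure_pmf (cond_pmf P (- {{}})))) obs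
       = stream_space (measure_pmf (cond_pmf P (- {{}})))"
proof -
  define R where "R = cond_pmf P (- {{}})"
  let ?SP = "stream_space (measure_pmf P)"
  let ?SR = "stream_space (measure_pmf R)"
  let ?D = "distr ?SP ?SR obs"
  interpret SP: prob_space ?SP
    by (rule prob_space.prob_space_stream_space[OF measure_pmf.prob_space_axioms])
  interpret SR: prob_space ?SR
    by (rule prob_space.prob_space_stream_space[OF measure_pmf.prob_space_axioms])
  have meas: "obs \<in> measurable ?SP ?SR" by (rule measurable_obs)
  interpret D: prob_space ?D by (rule SP.prob_space_distr[OF meas])
  have cyl_sets: "scylinder UNIV Xs \<in> sets ?SR" for Xs
    using sets_scylinder[of Xs "measure_pmf R"] by simp
  define pne where "pne = measure P (- {{}})"
  have pne_pos: "pne > 0" using ne measure_pmf_zero_iff[of P "- {{}}"] measure_nonneg[of P "- {{}}"]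
    unfolding pne_def by linarith
  have pne_eq: "pne = 1 - pmf P {}"
    using measure_pmf.prob_compl[of "{{}}" P] unfolding pne_def
    by (simp add: Compl_eq_Diff_UNIV measure_pmf_single)
  have RX: "measure R X = measure P (- {{}} \<inter> X) / pne" for X
  proof -
    have "emeasure R X = emeasure P (- {{}} \<inter> X) / emeasure P (- {{}})"
      unfolding R_def cond_pmf.rep_eq[OF ne] by simp
    also have "\<dots> = ennreal (measure P (- {{}} \<inter> X) / pne)"
      using pne_pos unfolding pne_def
      by (simp add: measure_pmf.emeasure_eq_measure divide_ennreal)
    finally show ?thesis
      by (simp add: measure_pmf.emeasure_eq_measure pne_def)
  qed
  have SRrec: "emeasure ?SR (scylinder UNIV (X # Xs)) = emeasure R X * emeasure ?SR (scylinder UNIV Xs)" for X Xs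
  proof -
    have "emeasure ?SR (scylinder UNIV (X # Xs)) =
        (\<integral>\<^sup>+t. emeasure ?SR {x \<in> space ?SR. t ## x \<in> scylinder UNIV (X # Xs)} \<partial>measure_pmf R)"
      by (rule prob_space.emeasure_stream_space[OF measure_pmf.prob_space_axioms cyl_sets])
    also have "\<dots> = (\<integral>\<^sup>+t. emeasure ?SR (scylinder UNIV Xs) * indicator X t \<partial>measure_pmf R)"
      by (intro nn_integral_cong) (auto simp: space_stream_space split: split_indicator)
    also have "\<dots> = emeasure ?SR (scylinder UNIV Xs) * emeasure R X"
      by (rule nn_integral_cmult_indicator) simp
    finally show ?thesis by (simp add: mult.commute)
  qed
  define f where "f Xs = measure ?SP (obs -` scylinder UNIV Xs \<inter> space ?SP)" for Xs
  have Dm: "emeasure ?D (scylinder UNIV Xs) = ennreal (f Xs)" for Xs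
    by (simp add: emeasure_distr[OF meas cyl_sets] f_def SP.emeasure_eq_measure)
  have Drec: "f (X # Xs) = measure R X * f Xs" for X Xs
  proof -
    let ?C = "obs -` scylinder UNIV (X # Xs) \<inter> space ?SP"
    have Cs: "?C \<in> sets ?SP" using measurable_sets[OF meas cyl_sets] .
    have "ennreal (f (X # Xs)) = emeasure ?SP ?C" by (simp add: f_def SP.emeasure_eq_measure)
    also have "\<dots> = (\<integral>\<^sup>+t. emeasure ?SP {x \<in> space ?SP. t ## x \<in> ?C} \<partial>measure_pmf P)"
      by (rule prob_space.emeasure_stream_space[OF measure_pmf.prob_space_axioms Cs])
    also have "\<dots> = (\<integral>\<^sup>+t. ennreal (f (X # Xs)) * indicator {{}} t + ennreal (f Xs) * indicator (- {{}} \<inter> X) t \<partial>measure_pmf P)"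
    proof (intro nn_integral_cong)
      fix t
      show "emeasure ?SP {x \<in> space ?SP. t ## x \<in> ?C} = ennreal (f (X # Xs)) * indicator {{}} t + ennreal (f Xs) * indicator (- {{}} \<inter> X) t"
      proof (cases "t = {}")
        case True
        then have e1: "obs (t ## x) = obs x" for x by (simp add: obs_Stream)
        have "{x \<in> space ?SP. t ## x \<in> ?C} = ?C"
          by (auto simp del: scylinder.simps simp: e1 space_stream_space)
        then show ?thesis using True by (simp del: scylinder.simps add: f_def SP.emeasure_eq_measure)
      next
        case False
        then have e1: "obs (t ## x) = t ## obs x" for x by (simp add: obs_Stream)
        have "{x \<in> space ?SP. t ## x \<in> ?C} = (if t \<in> X then obs -` scylinder UNIV Xs \<inter> space ?SP else {})"
          by (auto simp del: scylinder.simps simp: e1 space_stream_space scyl_Cons_iff)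
        then show ?thesis using False by (simp del: scylinder.simps add: f_def SP.emeasure_eq_measure)
      qed
    qed
    also have "\<dots> = ennreal (f (X # Xs)) * emeasure P {{}} + ennreal (f Xs) * emeasure P (- {{}} \<inter> X)"
      by (subst nn_integral_add) (auto simp: nn_integral_cmult_indicator)
    also have "\<dots> = ennreal (f (X # Xs) * pmf P {} + f Xs * measure P (- {{}} \<inter> X))"
      by (simp add: f_def measure_pmf.emeasure_eq_measure measure_pmf_single ennreal_mult ennreal_plus)
    finally have "f (X # Xs) = f (X # Xs) * pmf P {} + f Xs * measure P (- {{}} \<inter> X)"
      by (subst (asm) ennreal_inj) (auto simp: f_def)
    then have "f (X # Xs) * pne = f Xs * measure P (- {{}} \<inter> X)"
      unfolding pne_eq by (simp add: algebra_simps)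
    then show ?thesis using pne_pos unfolding RX by (simp add: field_simps)
  qed
  have eqc: "emeasure ?D (scylinder UNIV Xs) = emeasure ?SR (scylinder UNIV Xs)" for Xs
  proof (induction Xs)
    case Nil
    show ?case using D.emeasure_space_1 SR.emeasure_space_1 by (simp add: space_stream_space)
  next
    case (Cons X Xs)
    have "emeasure ?D (scylinder UNIV (X # Xs)) = ennreal (measure R X * f Xs)"
      unfolding Dm Drec ..
    also have "\<dots> = ennreal (measure R X) * ennreal (f Xs)"
      by (rule ennreal_mult) (simp_all add: f_def)
    also have "\<dots> = emeasure R X * emeasure ?SR (scylinder UNIV Xs)"
      using Cons Dm by (simp add: measure_pmf.emeasure_eq_measure)
    finally show ?case by (simp only: SRrec)
  qed
  have "?D = ?SR"
  proof (rule stream_space_eq_scylinder[where G = UNIV and S = "measure_pmf R" and C = "{UNIV}"])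
    show "prob_space ?D" "prob_space ?SR" by unfold_locales
    show "Int_stable UNIV" by (simp add: Int_stable_def)
    show "sets (measure_pmf R) = sets (sigma (space (measure_pmf R)) UNIV)"
      using sigma_algebra.sigma_sets_eq[OF sigma_algebra_Pow[of "UNIV :: nat set set"]] by simp
    show "countable {UNIV}" by simp
  qed (auto simp: eqc)
  then show ?thesis unfolding R_def .
qed


lemma hit_all:
  fixes \<phi> :: "nat \<Rightarrow> nat"
  assumes z: "\<phi> 0 = 0" and s: "\<And>n. \<phi> (Suc n) \<le> Suc (\<phi> n)" and u: "\<And>B. \<exists>n. B \<le> \<phi> n"
  shows "\<exists>n. \<phi> n = k"
proof -
  define n0 where "n0 = (LEAST n. k \<le> \<phi> n)"
  have n0: "k \<le> \<phi> n0" unfolding n0_def using u[of k] by (metis LeastI)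
  show ?thesis
  proof (cases n0)
    case 0 then show ?thesis using n0 z by auto
  next
    case (Suc m)
    then have "\<not> k \<le> \<phi> m" unfolding n0_def by (metis Suc lessI n0_def not_less_Least)
    then show ?thesis using n0 s[of m] Suc by (intro exI[of _ n0]) simp
  qed
qed

lemma lim_from_sub:
  fixes h :: "nat \<Rightarrow> real"
  assumes lim: "(\<lambda>n. h (\<phi> n)) \<longlonglongrightarrow> c" and hit: "\<And>k. \<exists>n. \<phi> n = k"
  shows "h \<longlonglongrightarrow> c"
proof (rule LIMSEQ_I)
  fix r :: real assume "0 < r"
  from LIMSEQ_D[OF lim this] obtain N0 where N0: "\<And>n. n \<ge> N0 \<Longrightarrow> norm (h (\<phi> n) - c) < r" by blast
  define B where "B = Max (insert 0 (\<phi> ` {..<N0}))"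
  have B: "n < N0 \<Longrightarrow> \<phi> n \<le> B" for n unfolding B_def by (intro Max_ge) auto
  show "\<exists>no. \<forall>k\<ge>no. norm (h k - c) < r"
  proof (intro exI allI impI)
    fix k assume k: "k \<ge> Suc B"
    obtain n where n: "\<phi> n = k" using hit by blast
    have "n \<ge> N0" using B[of n] k n by (metis not_less not_less_eq_eq)
    then show "norm (h k - c) < r" using N0 n by blast
  qed
qed

definition Fv :: "nat \<Rightarrow> nat set stream \<Rightarrow> nat set \<Rightarrow> nat" where
  "Fv k v = (\<lambda>x. if x = {} then 0 else card {j. j < k \<and> v !! j = x})"

lemma counts_Fv: "counts N w = Fv (cntA (- {{}}) N w) (obs w)"
  unfolding counts_def Fv_def
proof (rule ext)
  fix x
  show "(if x = {} then 0 else card {i. i < N \<and> w !! i = x}) =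
    (if x = {} then 0 else card {j. j < cntA (- {{}}) N w \<and> obs w !! j = x})"
  proof (cases "x = {}")
    case False
    show ?thesis by (subst counts_obs[OF False, of N w]) (rule refl)
  qed simp
qed

lemma nobs_cntA: "nobs N w = cntA (- {{}}) N w"
  unfolding nobs_def cntA_def by simp

definition enc :: "nat set \<Rightarrow> nat" where
  "enc = to_nat_on {x. finite x}"

definition Psi :: "nat \<Rightarrow> nat list \<Rightarrow> nat set \<Rightarrow> nat" where
  "Psi k l = (\<lambda>x. if x = {} \<or> infinite x then 0 else card {j. j < k \<and> l ! j = enc x})"

lemma Psi_Fv:
  assumes "\<And>j. finite (v !! j)"
  shows "Psi k (stake k (smap enc v)) = Fv k v"
proof -
  have inj: "inj_on enc {x. finite x}" unfolding enc_def
    by (rule inj_on_to_nat_on) (rule countable_Collect_finite)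
  have e: "{j. j < k \<and> stake k (smap enc v) ! j = enc x} = {j. j < k \<and> v !! j = x}" if fx: "finite x" for x
  proof (rule Collect_cong)
    fix j
    have "j < k \<Longrightarrow> (enc (v !! j) = enc x) = (v !! j = x)"
      using inj_on_eq_iff[OF inj, of "v !! j" x] assms fx by simp
    then show "(j < k \<and> stake k (smap enc v) ! j = enc x) = (j < k \<and> v !! j = x)"
      by (auto simp: stake_nth)
  qed
  have e2: "{j. j < k \<and> v !! j = x} = {}" if "infinite x" for x
    using assms that by auto
  show ?thesis unfolding Psi_def Fv_def
  proof (rule ext)
    fix x
    show "(if x = {} \<or> infinite x then 0 else card {j. j < k \<and> stake k (smap enc v) ! j = enc x}) =
      (if x = {} then 0 else card {j. j < k \<and> v !! j = x})"
      using e[of x] e2[of x] by (cases "finite x") auto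
  qed
qed

lemma measurable_stake_enc:
  "(\<lambda>v. stake k (smap enc v)) \<in> measurable (stream_space (measure_pmf R)) (count_space UNIV)"
proof -
  have "smap enc \<in> measurable (stream_space (measure_pmf R)) (stream_space (count_space UNIV))"
    by (rule measurable_smap) simp
  from measurable_compose[OF this measurable_stake[where i=k]] show ?thesis by simp
qed

lemma pred_Hm:
  fixes E :: "(nat set \<Rightarrow> nat) \<Rightarrow> real"
  shows "Measurable.pred (stream_space (measure_pmf R))
     (\<lambda>v. (\<lambda>k. E (Psi k (stake k (smap enc v))) / real k) \<longlonglongrightarrow> c)"
proof (rule measurable_limit)
  fix n
  show "(\<lambda>v. E (Psi n (stake n (smap enc v))) / real n) \<in> borel_measurable (stream_space (measure_pmf R))"
    by (rule measurable_compose[OF measurable_stake_enc[where k=n and R=R]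
        borel_measurable_count_space[where f = "\<lambda>l. E (Psi n l) / real n"]])
qed


lemma div_div_same: "N \<ge> 1 \<Longrightarrow> (a / real N) / (b / real N) = (a / b :: real)"
  by (cases "b = 0") (simp_all add: field_simps)

lemma cntA_unbounded:
  assumes fr: "(\<lambda>N. real (cntA A N w) / real N) \<longlonglongrightarrow> \<beta>" and \<beta>: "\<beta> > 0"
  shows "filterlim (\<lambda>N. real (cntA A N w)) at_top sequentially"
proof -
  have A: "filterlim (\<lambda>N. real (cntA A N w) / real N * real N) at_top sequentially"
    by (rule filterlim_tendsto_pos_mult_at_top[OF fr \<beta> filterlim_real_sequentially])
  have B: "eventually (\<lambda>N. real (cntA A N w) / real N * real N = real (cntA A N w)) sequentially"
    unfolding eventually_sequentially by (intro exI[of _ 1] allI impI) simp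
  show ?thesis using iffD1[OF filterlim_cong[OF refl refl B] A] .
qed

lemma H_of_w:
  fixes E :: "(nat set \<Rightarrow> nat) \<Rightarrow> real"
  assumes cons: "(\<lambda>N. E (counts N w) / real N) \<longlonglongrightarrow> 1"
    and fr: "(\<lambda>N. real (cntA (- {{}}) N w) / real N) \<longlonglongrightarrow> \<beta>" and \<beta>: "\<beta> > 0"
  shows "(\<lambda>k. E (Fv k (obs w)) / real k) \<longlonglongrightarrow> 1 / \<beta>"
proof -
  define \<phi> where "\<phi> N = cntA (- {{}}) N w" for N
  define h where "h k = E (Fv k (obs w)) / real k" for k
  have "(\<lambda>N. (E (counts N w) / real N) / (real (\<phi> N) / real N)) \<longlonglongrightarrow> 1 / \<beta>"
    unfolding \<phi>_def by (rule tendsto_divide[OF cons fr]) (use \<beta> in simp)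
  moreover have "eventually (\<lambda>N. (E (counts N w) / real N) / (real (\<phi> N) / real N) = h (\<phi> N)) sequentially"
    unfolding eventually_sequentially h_def \<phi>_def
    by (intro exI[of _ 1] allI impI) (simp add: counts_Fv div_div_same)
  ultimately have lim: "(\<lambda>N. h (\<phi> N)) \<longlonglongrightarrow> 1 / \<beta>" by (rule Lim_transform_eventually)
  have z: "\<phi> 0 = 0" by (simp add: \<phi>_def cntA_def)
  have s: "\<phi> (Suc n) \<le> Suc (\<phi> n)" for n by (simp add: \<phi>_def cntA_sum)
  have u: "\<exists>n. B \<le> \<phi> n" for B
  proof -
    have "filterlim (\<lambda>N. real (\<phi> N)) at_top sequentially"
      unfolding \<phi>_def by (rule cntA_unbounded[OF fr \<beta>])
    then have "eventually (\<lambda>N. real B \<le> real (\<phi> N)) sequentially" unfolding filterlim_at_top by blast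
    then show ?thesis by (auto simp: eventually_sequentially)
  qed
  have "h \<longlonglongrightarrow> 1 / \<beta>" by (rule lim_from_sub[OF lim hit_all[OF z s u]])
  then show ?thesis unfolding h_def .
qed

lemma key_Q:
  fixes Q :: "nat set pmf" and E :: "(nat set \<Rightarrow> nat) \<Rightarrow> real"
  assumes ne: "set_pmf Q \<inter> - {{}} \<noteq> {}" and fin: "set_pmf Q \<subseteq> {x. finite x}"
    and cons: "AE w in stream_space (measure_pmf Q). (\<lambda>N. E (counts N w) / real N) \<longlonglongrightarrow> 1"
  shows "AE v in stream_space (measure_pmf (cond_pmf Q (- {{}}))).
           (\<lambda>k. E (Fv k v) / real k) \<longlonglongrightarrow> 1 / measure Q (- {{}})"
proof -
  define R where "R = cond_pmf Q (- {{}})"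
  define \<beta> where "\<beta> = measure Q (- {{}})"
  let ?SQ = "stream_space (measure_pmf Q)"
  let ?SR = "stream_space (measure_pmf R)"
  obtain x0 where "x0 \<in> set_pmf Q" "x0 \<in> - {{}}" using ne by blast
  then have \<beta>: "\<beta> > 0" unfolding \<beta>_def by (rule measure_pmf_posI)
  have law: "distr ?SQ ?SR obs = ?SR" unfolding R_def by (rule obs_law[OF ne])
  have meas: "obs \<in> measurable ?SQ ?SR" by (rule measurable_obs)
  have finR: "AE v in ?SR. \<forall>j. finite (v !! j)"
  proof -
    have "AE v in ?SR. stream_all (\<lambda>x. finite x) v"
      by (rule prob_space.AE_stream_all[OF measure_pmf.prob_space_axioms])
         (use fin in \<open>auto simp: AE_measure_pmf_iff R_def set_cond_pmf[OF ne]\<close>)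
    then show ?thesis unfolding stream_all_def .
  qed
  have "AE v in distr ?SQ ?SR obs. \<forall>j. finite (v !! j)" unfolding law by (rule finR)
  then have finQ: "AE w in ?SQ. \<forall>j. finite (obs w !! j)" by (rule AE_distrD[OF meas])
  have "AE w in ?SQ. (\<lambda>N. E (counts N w) / real N) \<longlonglongrightarrow> 1 \<and>
      (\<lambda>N. real (cntA (- {{}}) N w) / real N) \<longlonglongrightarrow> \<beta>"
    using cons freq_limit[of "- {{}}" Q] unfolding \<beta>_def by (simp add: AE_conj_iff)
  then have "AE w in ?SQ. (\<lambda>k. E (Fv k (obs w)) / real k) \<longlonglongrightarrow> 1 / \<beta>"
    by (rule eventually_mono) (auto intro: H_of_w[OF _ _ \<beta>])
  with finQ have "AE w in ?SQ. (\<lambda>k. E (Psi k (stake k (smap enc (obs w)))) / real k) \<longlonglongrightarrow> 1 / \<beta>"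
    by (rule eventually_elim2) (simp del: stake_smap add: Psi_Fv)
  then have "AE v in distr ?SQ ?SR obs. (\<lambda>k. E (Psi k (stake k (smap enc v))) / real k) \<longlonglongrightarrow> 1 / \<beta>"
    by (rule iffD2[OF AE_distr_iff[OF meas predE[OF pred_Hm]]])
  then have Hm: "AE v in ?SR. (\<lambda>k. E (Psi k (stake k (smap enc v))) / real k) \<longlonglongrightarrow> 1 / \<beta>"
    unfolding law .
  from Hm finR have "AE v in ?SR. (\<lambda>k. E (Fv k v) / real k) \<longlonglongrightarrow> 1 / \<beta>"
    by (rule eventually_elim2) (simp del: stake_smap add: Psi_Fv)
  then show ?thesis unfolding R_def \<beta>_def .
qed



lemma alt_sum_Pow:
  assumes "finite A"
  shows "(\<Sum>x\<in>Pow A. (-1::real) ^ card x) = (if A = {} then 1 else 0)"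
  using assms
proof (induction A rule: finite_induct)
  case empty
  then show ?case by simp
next
  case (insert a A)
  have inj: "inj_on (insert a) (Pow A)"
    using insert(2) by (auto simp: inj_on_def)
  have disj: "Pow A \<inter> insert a ` Pow A = {}" using insert(2) by auto
  have "(\<Sum>x\<in>Pow (insert a A). (-1::real) ^ card x)
      = (\<Sum>x\<in>Pow A. (-1::real) ^ card x) + (\<Sum>x\<in>insert a ` Pow A. (-1::real) ^ card x)"
    unfolding Pow_insert by (rule sum.union_disjoint) (use insert(1) disj in auto)
  also have "(\<Sum>x\<in>insert a ` Pow A. (-1::real) ^ card x) = (\<Sum>x\<in>Pow A. (-1::real) ^ card (insert a x))"
    by (rule sum.reindex[OF inj, unfolded comp_def])
  also have "\<dots> = (\<Sum>x\<in>Pow A. - ((-1::real) ^ card x))"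
  proof (rule sum.cong[OF refl])
    fix x assume "x \<in> Pow A"
    then have "a \<notin> x" "finite x" using insert(1,2) finite_subset by auto
    then show "(-1::real) ^ card (insert a x) = - ((-1) ^ card x)" by simp
  qed
  finally show ?case by (simp add: sum_negf)
qed

lemma exists_Q:
  fixes P :: "nat set pmf" and L :: nat
  assumes L: "L \<ge> 1" and supp: "set_pmf P = Pow {..<L}"
  shows "\<exists>Q. set_pmf Q = Pow {..<L} \<and> full_interaction L Q = 0 \<and>
    cond_pmf Q (- {{}}) = cond_pmf P (- {{}}) \<and>
    1 / measure Q (- {{}}) = 1 + pmf P {} / (1 - pmf P {}) * exp (full_interaction L P)"
proof -
  define S where "S = Pow {..<L :: nat}"
  have finS: "finite S" unfolding S_def by simp
  have eS: "{} \<in> S" unfolding S_def by simp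
  have oS: "{0} \<in> S" using L unfolding S_def by auto
  define p0 where "p0 = pmf P {}"
  define \<gamma> where "\<gamma> = full_interaction L P"
  have pos: "x \<in> S \<Longrightarrow> pmf P x > 0" for x using supp by (simp add: pmf_positive_iff S_def)
  have zero: "x \<notin> S \<Longrightarrow> pmf P x = 0" for x using supp unfolding S_def by (metis set_pmf_iff)
  have p0pos: "p0 > 0" unfolding p0_def using pos[OF eS] .
  have neP: "set_pmf P \<inter> - {{}} \<noteq> {}" using supp oS unfolding S_def by auto
  have mP: "measure P (- {{}}) = 1 - p0"
    using measure_pmf.prob_compl[of "{{}}" P] unfolding p0_def
    by (simp add: Compl_eq_Diff_UNIV measure_pmf_single)
  have "{0} \<in> set_pmf P" "{0} \<in> - {{}}" using supp oS unfolding S_def by auto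
  then have "measure P (- {{}}) > 0" by (rule measure_pmf_posI)
  then have p01: "p0 < 1" using mP by simp
  define D where "D = 1 - p0 + p0 * exp \<gamma>"
  have Dpos: "D > 0" unfolding D_def using p0pos p01 by (simp add: add_pos_nonneg)
  define c where "c = 1 / D"
  have cpos: "c > 0" unfolding c_def using Dpos by simp
  have cD: "c * D = 1" unfolding c_def using Dpos by simp
  define f where "f x = (if x = {} then c * p0 * exp \<gamma> else c * pmf P x)" for x
  have fnn: "0 \<le> f x" for x unfolding f_def using cpos p0pos by auto
  have fpos: "x \<in> S \<Longrightarrow> f x > 0" for x unfolding f_def using cpos p0pos pos by auto
  have fzero: "x \<notin> S \<Longrightarrow> f x = 0" for x unfolding f_def using eS zero by auto
  have sumP: "(\<Sum>x\<in>S - {{}}. pmf P x) = 1 - p0"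
    using sum.remove[OF finS eS, of "pmf P"] sum_pmf_eq_1[OF finS, of P] supp
    unfolding S_def p0_def by simp
  have "(\<Sum>x\<in>S. f x) = f {} + (\<Sum>x\<in>S - {{}}. f x)" by (rule sum.remove[OF finS eS])
  also have "(\<Sum>x\<in>S - {{}}. f x) = (\<Sum>x\<in>S - {{}}. c * pmf P x)"
    by (rule sum.cong) (auto simp: f_def)
  also have "\<dots> = c * (1 - p0)" by (simp add: sum_distrib_left[symmetric] sumP)
  finally have sumf: "(\<Sum>x\<in>S. f x) = 1" using cD unfolding f_def D_def by (simp add: algebra_simps)
  have int: "(\<integral>\<^sup>+x. ennreal (f x) \<partial>count_space UNIV) = 1"
    by (subst nn_integral_count_space'[OF finS]) (use fzero fnn sumf in auto)
  define Q where "Q = embed_pmf f"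
  have pmfQ: "pmf Q x = f x" for x unfolding Q_def by (rule pmf_embed_pmf[OF fnn int])
  have setQ: "set_pmf Q = S"
  proof (intro set_eqI)
    fix x show "x \<in> set_pmf Q \<longleftrightarrow> x \<in> S"
      using fpos[of x] fzero[of x] by (cases "x \<in> S") (auto simp: set_pmf_iff pmfQ)
  qed
  have neQ: "set_pmf Q \<inter> - {{}} \<noteq> {}" using setQ oS by auto
  have mQ: "measure Q (- {{}}) = c * (1 - p0)"
  proof -
    have "measure Q (- {{}}) = 1 - pmf Q {}"
      using measure_pmf.prob_compl[of "{{}}" Q] by (simp add: Compl_eq_Diff_UNIV measure_pmf_single)
    also have "\<dots> = c * (1 - p0)" using cD unfolding pmfQ f_def D_def by (simp add: algebra_simps)
    finally show ?thesis .
  qed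
  have lnf: "ln (f x) = ln c + ln (pmf P x) + (if x = {} then \<gamma> else 0)" if "x \<in> S" for x
  proof (cases "x = {}")
    case True
    then show ?thesis using cpos p0pos unfolding f_def p0_def
      by (simp add: ln_mult)
  next
    case False
    then show ?thesis using cpos pos[OF that] unfolding f_def by (simp add: ln_mult)
  qed
  have sgn0: "(\<Sum>x\<in>S. (-1::real) ^ (card x + 1)) = 0"
  proof -
    have "{..<L} \<noteq> {}" using L by (metis One_nat_def lessThan_iff less_le_trans empty_iff zero_less_one)
    then show ?thesis using alt_sum_Pow[of "{..<L}"] unfolding S_def by (simp add: sum_negf)
  qed
  have "full_interaction L Q = (\<Sum>x\<in>S. (-1) ^ (card x + 1) * ln (f x))"
    unfolding full_interaction_def S_def[symmetric] pmfQ ..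
  also have "\<dots> = (\<Sum>x\<in>S. (-1) ^ (card x + 1) * ln c + (-1) ^ (card x + 1) * ln (pmf P x)
       + (if x = {} then - \<gamma> else 0))"
    by (rule sum.cong[OF refl]) (auto simp: lnf algebra_simps)
  also have "\<dots> = (\<Sum>x\<in>S. (-1) ^ (card x + 1) * ln c) + (\<Sum>x\<in>S. (-1) ^ (card x + 1) * ln (pmf P x))
       + (\<Sum>x\<in>S. if x = {} then - \<gamma> else 0)"
    by (simp only: sum.distrib)
  also have "(\<Sum>x\<in>S. (-1) ^ (card x + 1) * ln (pmf P x)) = \<gamma>"
    unfolding \<gamma>_def full_interaction_def S_def ..
  also have "(\<Sum>x\<in>S. if x = {} then - \<gamma> else 0) = - \<gamma>"
    using finS eS by simp
  also have "(\<Sum>x\<in>S. (-1::real) ^ (card x + 1) * ln c) = 0"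
    unfolding sum_distrib_right[symmetric] sgn0 by simp
  finally have gQ: "full_interaction L Q = 0" by simp
  have cond: "cond_pmf Q (- {{}}) = cond_pmf P (- {{}})"
  proof (rule pmf_eqI)
    fix x
    show "pmf (cond_pmf Q (- {{}})) x = pmf (cond_pmf P (- {{}})) x"
      unfolding pmf_cond[OF neQ] pmf_cond[OF neP] mQ mP pmfQ f_def
      using cpos by auto
  qed
  have tgt: "1 / measure Q (- {{}}) = 1 + p0 / (1 - p0) * exp \<gamma>"
  proof -
    have "1 / measure Q (- {{}}) = D / (1 - p0)" unfolding mQ c_def using Dpos p01 by simp
    also have "\<dots> = 1 + p0 / (1 - p0) * exp \<gamma>" unfolding D_def using p01 by (simp add: field_simps)
    finally show ?thesis .
  qed
  show ?thesis
    by (intro exI[of _ Q]) (use setQ gQ cond tgt in \<open>auto simp: S_def p0_def \<gamma>_def\<close>)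
qed


lemma nat_at_top_of_real:
  assumes "filterlim (\<lambda>N. real (g N)) at_top sequentially"
  shows "filterlim g at_top sequentially"
  unfolding filterlim_at_top
proof
  fix Z :: nat
  from assms have "eventually (\<lambda>N. real Z \<le> real (g N)) sequentially"
    unfolding filterlim_at_top by blast
  then show "eventually (\<lambda>N. Z \<le> g N) sequentially" by (rule eventually_mono) simp
qed

theorem corollary1:
  fixes L :: nat and E :: "(nat set \<Rightarrow> nat) \<Rightarrow> real" and P :: "nat set pmf"
  assumes "L \<ge> 2"
    and "consistent_gamma0 L E"
    and "set_pmf P = Pow {..<L}"
  shows "AE w in stream_space (measure_pmf P).
           (\<lambda>N. E (counts N w) / real (nobs N w))
             \<longlonglongrightarrow> 1 + pmf P {} / (1 - pmf P {}) * exp (full_interaction L P)"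
proof -
  let ?t = "1 + pmf P {} / (1 - pmf P {}) * exp (full_interaction L P)"
  let ?SP = "stream_space (measure_pmf P)"
  let ?SR = "stream_space (measure_pmf (cond_pmf P (- {{}})))"
  have L1: "L \<ge> 1" using assms(1) by simp
  obtain Q where Q: "set_pmf Q = Pow {..<L}" "full_interaction L Q = 0"
      "cond_pmf Q (- {{}}) = cond_pmf P (- {{}})" "1 / measure Q (- {{}}) = ?t"
    using exists_Q[OF L1 assms(3)] by blast
  have consQ: "AE w in stream_space (measure_pmf Q). (\<lambda>N. E (counts N w) / real N) \<longlonglongrightarrow> 1"
    using assms(2) Q(1,2) unfolding consistent_gamma0_def by blast
  have o: "{0} \<in> Pow {..<L}" using L1 by auto
  have neQ: "set_pmf Q \<inter> - {{}} \<noteq> {}" using Q(1) o by auto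
  have neP: "set_pmf P \<inter> - {{}} \<noteq> {}" using assms(3) o by auto
  have finQ: "set_pmf Q \<subseteq> {x. finite x}" using Q(1) by (auto intro: finite_subset)
  have A: "AE v in ?SR. (\<lambda>k. E (Fv k v) / real k) \<longlonglongrightarrow> ?t"
    using key_Q[OF neQ finQ consQ] unfolding Q(3) Q(4) .
  have meas: "obs \<in> measurable ?SP ?SR" by (rule measurable_obs)
  have "AE v in distr ?SP ?SR obs. (\<lambda>k. E (Fv k v) / real k) \<longlonglongrightarrow> ?t"
    by (subst obs_law[OF neP]) (rule A)
  then have B: "AE w in ?SP. (\<lambda>k. E (Fv k (obs w)) / real k) \<longlonglongrightarrow> ?t"
    by (rule AE_distrD[OF meas])
  have C: "AE w in ?SP. (\<lambda>N. real (cntA (- {{}}) N w) / real N) \<longlonglongrightarrow> measure P (- {{}})"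
    by (rule freq_limit)
  have "{0} \<in> set_pmf P" "{0} \<in> - {{}}" using assms(3) o by auto
  then have pos: "measure P (- {{}}) > 0" by (rule measure_pmf_posI)
  from B C show ?thesis
  proof (rule eventually_elim2)
    fix w
    assume hw: "(\<lambda>k. E (Fv k (obs w)) / real k) \<longlonglongrightarrow> ?t"
      and cw: "(\<lambda>N. real (cntA (- {{}}) N w) / real N) \<longlonglongrightarrow> measure P (- {{}})"
    have "filterlim (\<lambda>N. cntA (- {{}}) N w) at_top sequentially"
      by (rule nat_at_top_of_real[OF cntA_unbounded[OF cw pos]])
    from filterlim_compose[OF hw this]
    show "(\<lambda>N. E (counts N w) / real (nobs N w)) \<longlonglongrightarrow> ?t"
      unfolding counts_Fv nobs_cntA .
  qed
qed

end
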